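(* Let $G$ be a finite simple graph having a Hamiltonian path $P=x_1x_2\dots x_n$ such that $G$ has no two secant edges with respect to $P$. Then $\chi(G)\le 3$.
   Context: Edges of $G$ are secant with respect to $P$ if they are secant with respect to the enumeration $x_1x_2\dots x_n$ induced by $P$: an edge $x_ix_j$ is a jump if $|i-j|>1$, and two jumps $x_lx_m$, $x_px_q$ with $l<m$, $p<q$ are secant if $l<p<m<q$ or $p<l<q<m$. *)

theory Defs
  imports Main
begin

definition simple_graph :: "'a set \<Rightarrow> ('a \<Rightarrow> 'a \<Rightarrow> bool) \<Rightarrow> bool" where
  "simple_graph V E \<longleftrightarrow> finite V \<and> (\<forall>x y. E x y \<longrightarrow> x \<in> V \<and> y \<in> V)
     \<and> (\<forall>x y. E x y \<longrightarrow> E y x) \<and> (\<forall>x. \<not> E x x)"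

text \<open>Hamiltonian path P = x_1 ... x_n given as a list (0-indexed).\<close>
definition hamiltonian_path :: "'a set \<Rightarrow> ('a \<Rightarrow> 'a \<Rightarrow> bool) \<Rightarrow> 'a list \<Rightarrow> bool" where
  "hamiltonian_path V E P \<longleftrightarrow> distinct P \<and> set P = V
     \<and> (\<forall>i. Suc i < length P \<longrightarrow> E (P ! i) (P ! Suc i))"

definition jump :: "('a \<Rightarrow> 'a \<Rightarrow> bool) \<Rightarrow> 'a list \<Rightarrow> nat \<Rightarrow> nat \<Rightarrow> bool" where
  "jump E P l m \<longleftrightarrow> l < m \<and> m < length P \<and> E (P ! l) (P ! m) \<and> m - l > 1"

definition secant :: "('a \<Rightarrow> 'a \<Rightarrow> bool) \<Rightarrow> 'a list \<Rightarrow> nat \<Rightarrow> nat \<Rightarrow> nat \<Rightarrow> nat \<Rightarrow> bool" where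
  "secant E P l m p q \<longleftrightarrow> jump E P l m \<and> jump E P p q \<and>
     ((l < p \<and> p < m \<and> m < q) \<or> (p < l \<and> l < q \<and> q < m))"

definition no_secant_edges :: "('a \<Rightarrow> 'a \<Rightarrow> bool) \<Rightarrow> 'a list \<Rightarrow> bool" where
  "no_secant_edges E P \<longleftrightarrow> (\<forall>l m p q. \<not> secant E P l m p q)"

definition proper_colouring :: "'a set \<Rightarrow> ('a \<Rightarrow> 'a \<Rightarrow> bool) \<Rightarrow> nat \<Rightarrow> ('a \<Rightarrow> nat) \<Rightarrow> bool" where
  "proper_colouring V E k c \<longleftrightarrow> (\<forall>x\<in>V. c x < k) \<and> (\<forall>x y. E x y \<longrightarrow> c x \<noteq> c y)"

definition chromatic_number :: "'a set \<Rightarrow> ('a \<Rightarrow> 'a \<Rightarrow> bool) \<Rightarrow> nat" where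
  "chromatic_number V E = (LEAST k. \<exists>c. proper_colouring V E k c)"

end

theory Submission
  imports Defs
begin

lemma low_deg_aux:
  fixes R :: "nat \<Rightarrow> nat \<Rightarrow> bool"
  assumes sym: "\<And>x y. R x y \<Longrightarrow> R y x"
    and irr: "\<And>x. \<not> R x x"
    and nc: "\<And>l p m q. l < p \<Longrightarrow> p < m \<Longrightarrow> m < q \<Longrightarrow> \<not> (R l m \<and> R p q)"
    and fin: "finite S"
  shows "(\<forall>x\<in>S. a < x \<and> x < b \<longrightarrow> (\<forall>y\<in>S. R x y \<longrightarrow> a \<le> y \<and> y \<le> b))
     \<Longrightarrow> (\<exists>x\<in>S. a < x \<and> x < b) \<Longrightarrow> (\<exists>x\<in>S. a < x \<and> x < b \<and> card {y\<in>S. R x y} \<le> 2)"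
proof (induction "b - a" arbitrary: a b rule: less_induct)
  case less
  note C = less.prems(1)
  show ?case
  proof (cases "\<exists>u v. u\<in>S \<and> v\<in>S \<and> a \<le> u \<and> u < v \<and> v \<le> b \<and> (u,v) \<noteq> (a,b) \<and> R u v \<and> (\<exists>x\<in>S. u<x \<and> x<v)")
    case True
    then obtain u v where uv: "u\<in>S" "v\<in>S" "a \<le> u" "u < v" "v \<le> b" "(u,v) \<noteq> (a,b)" "R u v" "\<exists>x\<in>S. u<x \<and> x<v"
      by blast
    have lt: "v - u < b - a" using uv by auto
    have C2: "\<forall>x\<in>S. u < x \<and> x < v \<longrightarrow> (\<forall>y\<in>S. R x y \<longrightarrow> u \<le> y \<and> y \<le> v)"
    proof (intro ballI impI allI)
      fix x y assume x: "x \<in> S" "u < x \<and> x < v" and y: "y \<in> S" "R x y"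
      show "u \<le> y \<and> y \<le> v"
      proof (rule ccontr)
        assume "\<not> (u \<le> y \<and> y \<le> v)"
        then consider "y < u" | "v < y" by linarith
        then show False
        proof cases
          case 1 then show False using nc[of y u x v] x y uv sym by blast
        next
          case 2 then show False using nc[of u x v y] x y uv by blast
        qed
      qed
    qed
    from less.hyps[OF lt C2 uv(8)] obtain x where "x\<in>S" "u < x \<and> x < v \<and> card {y\<in>S. R x y} \<le> 2"
      by blast
    moreover have "a < x" "x < b" using calculation uv by linarith+
    ultimately show ?thesis by blast
  next
    case False
    define I where "I = {x\<in>S. a < x \<and> x < b}"
    have finI: "finite I" using fin I_def by auto
    have neI: "I \<noteq> {}" using less.prems(2) I_def by auto
    define s where "s = Min I"
    have sI: "s \<in> I" using finI neI s_def by auto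
    have smin: "\<And>x. x \<in> I \<Longrightarrow> s \<le> x" using finI s_def by auto
    define T where "T = {y\<in>S. R s y \<and> s < y}"
    have sub: "{y\<in>S. R s y} \<subseteq> {a} \<union> T"
    proof
      fix y assume y: "y \<in> {y\<in>S. R s y}"
      have ab: "a \<le> y \<and> y \<le> b" using C sI y I_def by auto
      have "y \<noteq> s" using irr y by auto
      show "y \<in> {a} \<union> T"
      proof (cases "y < s")
        case True
        have "y = a"
        proof (rule ccontr)
          assume "y \<noteq> a"
          then have "y \<in> I" using ab True sI y I_def by auto
          then show False using smin True by force
        qed
        then show ?thesis by simp
      next
        case False
        then show ?thesis using y \<open>y \<noteq> s\<close> T_def by auto
      qed
    qed
    have T1: "card T \<le> Suc 0"
    proof -
      have finT: "finite T" using fin T_def by auto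
      have "\<forall>y1\<in>T. \<forall>y2\<in>T. y1 = y2"
      proof (intro ballI, rule ccontr)
        fix y1 y2 assume t: "y1 \<in> T" "y2 \<in> T" "y1 \<noteq> y2"
        have gen: "\<And>z w. z \<in> T \<Longrightarrow> w \<in> T \<Longrightarrow> z < w \<Longrightarrow> False"
        proof -
          fix z w assume zw: "z \<in> T" "w \<in> T" "z < w"
          have "w \<le> b" using C sI zw I_def T_def by auto
          moreover have "a < s" "s \<in> S" using sI I_def by auto
          ultimately show False using False zw T_def by force
        qed
        show False using t gen by (metis linorder_neqE_nat)
      qed
      then show ?thesis using finT card_le_Suc0_iff_eq by blast
    qed
    have "card {y\<in>S. R s y} \<le> card ({a} \<union> T)"
      using sub fin T_def by (intro card_mono) auto
    also have "\<dots> \<le> card {a} + card T" by (rule card_Un_le)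
    also have "\<dots> \<le> 2" using T1 by simp
    finally show ?thesis using sI I_def by auto
  qed
qed

lemma low_deg:
  fixes R :: "nat \<Rightarrow> nat \<Rightarrow> bool"
  assumes sym: "\<And>x y. R x y \<Longrightarrow> R y x"
    and irr: "\<And>x. \<not> R x x"
    and nc: "\<And>l p m q. l < p \<Longrightarrow> p < m \<Longrightarrow> m < q \<Longrightarrow> \<not> (R l m \<and> R p q)"
    and fin: "finite S" and ne: "S \<noteq> {}"
  shows "\<exists>x\<in>S. card {y\<in>S. R x y} \<le> 2"
proof (cases "\<exists>x\<in>S. Min S < x \<and> x < Max S")
  case True
  have "\<forall>x\<in>S. Min S < x \<and> x < Max S \<longrightarrow> (\<forall>y\<in>S. R x y \<longrightarrow> Min S \<le> y \<and> y \<le> Max S)"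
    using fin by auto
  from low_deg_aux[of R S, OF sym irr nc fin this True] show ?thesis by blast
next
  case False
  have "S \<subseteq> {Min S, Max S}"
  proof
    fix x assume "x \<in> S"
    then have "Min S \<le> x" "x \<le> Max S" using fin by auto
    then show "x \<in> {Min S, Max S}" using False \<open>x \<in> S\<close> by force
  qed
  then have "card S \<le> card {Min S, Max S}" by (intro card_mono) auto
  also have "\<dots> \<le> 2" by (cases "Min S = Max S") auto
  finally have "card S \<le> 2" .
  moreover have "card {y\<in>S. R (Min S) y} \<le> card S" using fin by (intro card_mono) auto
  moreover have "Min S \<in> S" using fin ne by simp
  ultimately show ?thesis by (intro bexI[of _ "Min S"]) auto
qed

lemma colour3:
  fixes R :: "nat \<Rightarrow> nat \<Rightarrow> bool"
  assumes sym: "\<And>x y. R x y \<Longrightarrow> R y x"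
    and irr: "\<And>x. \<not> R x x"
    and nc: "\<And>l p m q. l < p \<Longrightarrow> p < m \<Longrightarrow> m < q \<Longrightarrow> \<not> (R l m \<and> R p q)"
  shows "finite S \<Longrightarrow> \<exists>c. (\<forall>x\<in>S. c x < (3::nat)) \<and> (\<forall>x\<in>S. \<forall>y\<in>S. R x y \<longrightarrow> c x \<noteq> c y)"
proof (induction "card S" arbitrary: S rule: less_induct)
  case less
  show ?case
  proof (cases "S = {}")
    case True then show ?thesis by auto
  next
    case False
    obtain v where v: "v \<in> S" "card {y\<in>S. R v y} \<le> 2"
      using low_deg[of R S, OF sym irr nc less.prems False] by blast
    define S' where "S' = S - {v}"
    have lt: "card S' < card S" unfolding S'_def by (rule card_Diff1_less[OF less.prems v(1)])
    obtain c where c: "\<forall>x\<in>S'. c x < (3::nat)" "\<forall>x\<in>S'. \<forall>y\<in>S'. R x y \<longrightarrow> c x \<noteq> c y"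
      using less.hyps[OF lt] less.prems S'_def by auto
    define U where "U = c ` {y\<in>S. R v y}"
    have finU: "finite U" unfolding U_def using less.prems by simp
    have "card U \<le> card {y\<in>S. R v y}" unfolding U_def
      by (rule card_image_le) (simp add: less.prems)
    then have cU: "card U \<le> 2" using v(2) by linarith
    have "\<not> {0,1,2::nat} \<subseteq> U"
    proof
      assume "{0,1,2::nat} \<subseteq> U"
      then have "card {0,1,2::nat} \<le> card U" using finU by (rule card_mono[rotated])
      then show False using cU by simp
    qed
    then obtain k where k: "k < (3::nat)" "k \<notin> U" by (metis insert_subset empty_subsetI less_numeral_extra(1) One_nat_def zero_less_numeral one_less_numeral_iff semiring_norm(77) numeral_One numeral_less_iff lessI numeral_2_eq_2 numeral_3_eq_3 less_Suc_eq)
    define c' where "c' = c(v := k)"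
    have "\<forall>x\<in>S. c' x < 3" using c k S'_def c'_def by auto
    moreover have "\<forall>x\<in>S. \<forall>y\<in>S. R x y \<longrightarrow> c' x \<noteq> c' y"
    proof (intro ballI impI)
      fix x y assume xy: "x \<in> S" "y \<in> S" "R x y"
      show "c' x \<noteq> c' y"
      proof (cases "x = v")
        case True
        then have "y \<noteq> v" using irr xy by auto
        then show ?thesis using True xy k U_def c'_def by auto
      next
        case False
        show ?thesis
        proof (cases "y = v")
          case True
          then have "R v x" using sym xy by auto
          then show ?thesis using True False xy k U_def c'_def by auto
        next
          case False2: False
          then show ?thesis using False xy c S'_def c'_def by auto
        qed
      qed
    qed
    ultimately show ?thesis by blast
  qed
qed

theorem proposition3:
  fixes V :: "'a set" and E :: "'a \<Rightarrow> 'a \<Rightarrow> bool" and P :: "'a list"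
  assumes "simple_graph V E"
    and "hamiltonian_path V E P"
    and "no_secant_edges E P"
  shows "chromatic_number V E \<le> 3"
proof -
  define R where "R = (\<lambda>i j. i < length P \<and> j < length P \<and> E (P ! i) (P ! j))"
  have G: "finite V" "\<And>x y. E x y \<Longrightarrow> x \<in> V \<and> y \<in> V" "\<And>x y. E x y \<Longrightarrow> E y x" "\<And>x. \<not> E x x"
    using assms(1) unfolding simple_graph_def by auto
  have H: "distinct P" "set P = V" using assms(2) unfolding hamiltonian_path_def by auto
  have sym: "\<And>x y. R x y \<Longrightarrow> R y x" using G R_def by auto
  have irr: "\<And>x. \<not> R x x" using G R_def by auto
  have nc: "\<And>l p m q. l < p \<Longrightarrow> p < m \<Longrightarrow> m < q \<Longrightarrow> \<not> (R l m \<and> R p q)"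
  proof
    fix l p m q assume o: "l < p" "p < m" "m < q" and r: "R l m \<and> R p q"
    have "secant E P l m p q" unfolding secant_def jump_def using o r R_def by auto
    then show False using assms(3) unfolding no_secant_edges_def by blast
  qed
  obtain c where c: "\<forall>x\<in>{0..<length P}. c x < (3::nat)"
     "\<forall>x\<in>{0..<length P}. \<forall>y\<in>{0..<length P}. R x y \<longrightarrow> c x \<noteq> c y"
    using colour3[of R "{0..<length P}", OF sym irr nc] by blast
  define ix where "ix = (\<lambda>x. SOME i. i < length P \<and> P ! i = x)"
  have ix: "\<And>x. x \<in> V \<Longrightarrow> ix x < length P \<and> P ! (ix x) = x"
  proof -
    fix x assume "x \<in> V"
    then have "\<exists>i. i < length P \<and> P ! i = x" using H by (metis in_set_conv_nth)
    then show "ix x < length P \<and> P ! (ix x) = x" unfolding ix_def by (rule someI_ex)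
  qed
  define col where "col = (\<lambda>x. c (ix x))"
  have "proper_colouring V E 3 col"
    unfolding proper_colouring_def
  proof (intro conjI ballI allI impI)
    fix x assume "x \<in> V" then show "col x < 3" using ix c col_def by auto
  next
    fix x y assume e: "E x y"
    then have xy: "x \<in> V" "y \<in> V" using G by auto
    have "R (ix x) (ix y)" using ix[OF xy(1)] ix[OF xy(2)] e R_def by auto
    then show "col x \<noteq> col y" using c ix[OF xy(1)] ix[OF xy(2)] col_def by auto
  qed
  then show ?thesis unfolding chromatic_number_def by (intro Least_le) blast
qed

end
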